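(* Let $\mathcal C_1,\dots,\mathcal C_m\subset\mathbb{R}^P$ be compact convex sets each containing the origin as an interior point, and $G_i=\gamma_{\mathcal C_i}$ their gauges. For each $i$ let $L_{2,i}>0$ be a constant such that $\|\mathrm{Prox}_{tG_i}(y)-\mathrm{Prox}_{t'G_i}(y)\|\le L_{2,i}|t-t'|$ for all $t,t'>0$ and all $y\in\mathbb{R}^P$. Then for any $\theta,\theta'\in\,]0,+\infty[^m$ and any $y\in\mathbb{R}^P$, $$\big\|\mathrm{Prox}_{\theta_1G_1}\circ\cdots\circ\mathrm{Prox}_{\theta_mG_m}(y)-\mathrm{Prox}_{\theta'_1G_1}\circ\cdots\circ\mathrm{Prox}_{\theta'_mG_m}(y)\big\|\le\sqrt m\,\max_iL_{2,i}\,\|\theta-\theta'\|.$$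
   Context: The gauge of a non-empty closed convex set $\mathcal C$ containing the origin is $\gamma_{\mathcal C}(y)=\inf\{\omega>0: y\in\omega\mathcal C\}$. $\mathrm{Prox}_{G}(y)=\operatorname{argmin}_z\frac12\|z-y\|^2+G(z)$. Such constants $L_{2,i}$ exist for gauges of compact convex sets with the origin in their interior. *)

theory Defs
  imports "HOL-Analysis.Analysis"
begin

definition gauge_fn :: "'a::real_vector set \<Rightarrow> 'a \<Rightarrow> real" where
  "gauge_fn C y = Inf {\<omega>. \<omega> > 0 \<and> y \<in> (\<lambda>x. \<omega> *\<^sub>R x) ` C}"

text \<open>Proximal operator: the minimizer of 1/2 norm(z - y)^2 + G z
  (unique for proper lsc convex G; chosen by Hilbert choice).\<close>
definition prox :: "('a::real_normed_vector \<Rightarrow> real) \<Rightarrow> 'a \<Rightarrow> 'a" where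
  "prox G y = (SOME z. \<forall>w. (1/2) * (norm (z - y))\<^sup>2 + G z \<le> (1/2) * (norm (w - y))\<^sup>2 + G w)"

text \<open>Prox_{theta_0 G_0} o ... o Prox_{theta_{m-1} G_{m-1}} (y) (indices shifted to 0..m-1).\<close>
definition prox_comp :: "nat \<Rightarrow> (nat \<Rightarrow> real) \<Rightarrow> (nat \<Rightarrow> 'a::real_normed_vector \<Rightarrow> real) \<Rightarrow> 'a \<Rightarrow> 'a" where
  "prox_comp m \<theta> G y = foldr (\<lambda>i z. prox (\<lambda>x. \<theta> i * G i x) z) [0..<m] y"

end

theory Submission
  imports Defs
begin

lemma gauge_mem_iff:
  fixes C :: "'a::real_vector set"
  assumes "w > 0"
  shows "y \<in> (\<lambda>x. w *\<^sub>R x) ` C \<longleftrightarrow> y /\<^sub>R w \<in> C"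
proof
  assume "y \<in> (\<lambda>x. w *\<^sub>R x) ` C" then obtain x where "x \<in> C" "y = w *\<^sub>R x" by blast
  then show "y /\<^sub>R w \<in> C" using assms by simp
next
  assume "y /\<^sub>R w \<in> C"
  moreover have "y = w *\<^sub>R (y /\<^sub>R w)" using assms by simp
  ultimately show "y \<in> (\<lambda>x. w *\<^sub>R x) ` C" by blast
qed

locale gset =
  fixes C :: "'a::euclidean_space set"
  assumes cvx: "convex C" and int0: "0 \<in> interior C"
begin

definition S where "S y = {\<omega>. \<omega> > 0 \<and> y \<in> (\<lambda>x. \<omega> *\<^sub>R x) ` C}"

lemma zeroC: "0 \<in> C" using int0 interior_subset by blast

lemma S_iff: "w \<in> S y \<longleftrightarrow> w > 0 \<and> y /\<^sub>R w \<in> C"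
  unfolding S_def using gauge_mem_iff by auto

lemma S_ne: "S y \<noteq> {}"
proof -
  obtain r where r: "r > 0" "ball 0 r \<subseteq> C" using int0 mem_interior by blast
  define w where "w = 2 * norm y / r + 1"
  have "0 \<le> 2 * norm y / r" using r by simp
  then have w: "w > 0" unfolding w_def by linarith
  have "norm (y /\<^sub>R w) = norm y / w" using w by (simp add: field_simps)
  also have "\<dots> < r"
  proof -
    have "r * w = 2*norm y + r" using r by (simp add: w_def algebra_simps)
    then have "norm y < r * w" using r norm_ge_zero[of y] by linarith
    then show ?thesis using w by (simp add: divide_less_eq)
  qed
  finally have "y /\<^sub>R w \<in> C" using r by auto
  then show ?thesis using S_iff w by blast
qed

lemma S_bdd: "bdd_below (S y)" unfolding bdd_below_def by (rule exI[of _ 0]) (auto simp: S_iff)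

lemma S_up: assumes "w \<in> S y" "w' \<ge> w" shows "w' \<in> S y"
proof -
  have w: "w > 0" "y /\<^sub>R w \<in> C" using assms S_iff by auto
  have "y /\<^sub>R w' = (w / w') *\<^sub>R (y /\<^sub>R w) + (1 - w / w') *\<^sub>R 0" using w assms(2) by (simp add: field_simps)
  moreover have "w / w' \<ge> 0" "w / w' \<le> 1" using w assms(2) by auto
  ultimately have "y /\<^sub>R w' \<in> C" using convexD[OF cvx w(2) zeroC, of "w/w'" "1 - w/w'"] w(1) by (simp add: inverse_eq_divide)
  then show ?thesis using S_iff w assms(2) by auto
qed

lemma g_eq: "gauge_fn C y = Inf (S y)" unfolding gauge_fn_def S_def ..

lemma g_nonneg: "gauge_fn C y \<ge> 0"
  unfolding g_eq by (rule cInf_greatest[OF S_ne]) (auto simp: S_iff)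

lemma g_eps: assumes "(e::real) > 0" shows "gauge_fn C y + e \<in> S y"
proof -
  obtain w where "w \<in> S y" "w < Inf (S y) + e"
    using cInf_lessD[OF S_ne[of y], where z="Inf (S y) + e"]  assms by auto
  then show ?thesis unfolding g_eq using S_up by fastforce
qed

lemma g_le: assumes "w \<in> S y" shows "gauge_fn C y \<le> w"
  unfolding g_eq using cInf_lower[OF assms S_bdd] .

lemma g_convex: "convex_on UNIV (gauge_fn C)"
proof (rule convex_onI)
  fix t :: real and a b :: 'a
  assume t: "0 < t" "t < 1"
  show "gauge_fn C ((1 - t) *\<^sub>R a + t *\<^sub>R b) \<le> (1 - t) * gauge_fn C a + t * gauge_fn C b"
  proof (rule field_le_epsilon)
    fix e :: real assume e: "e > 0"
    define \<alpha> where "\<alpha> = gauge_fn C a + e"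
    define \<beta> where "\<beta> = gauge_fn C b + e"
    have A: "\<alpha> > 0" "a /\<^sub>R \<alpha> \<in> C" using g_eps[OF e, of a] S_iff \<alpha>_def by auto
    have B: "\<beta> > 0" "b /\<^sub>R \<beta> \<in> C" using g_eps[OF e, of b] S_iff \<beta>_def by auto
    define s where "s = (1-t)*\<alpha> + t*\<beta>"
    have s: "s > 0" unfolding s_def using A B t by (simp add: add_pos_pos)
    have "((1 - t) *\<^sub>R a + t *\<^sub>R b) /\<^sub>R s
       = ((1-t)*\<alpha>/s) *\<^sub>R (a /\<^sub>R \<alpha>) + (t*\<beta>/s) *\<^sub>R (b /\<^sub>R \<beta>)"
    proof -
      have e1: "(1-t)*\<alpha>/s * inverse \<alpha> = (1-t)/s" using A s by (simp add: field_simps)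
      have e2: "t*\<beta>/s * inverse \<beta> = t/s" using B s by (simp add: field_simps)
      have f1: "((1-t)*\<alpha>/s) *\<^sub>R (a /\<^sub>R \<alpha>) = ((1-t)/s) *\<^sub>R a" by (simp only: scaleR_scaleR e1)
      have f2: "(t*\<beta>/s) *\<^sub>R (b /\<^sub>R \<beta>) = (t/s) *\<^sub>R b" by (simp only: scaleR_scaleR e2)
      have f3: "((1 - t) *\<^sub>R a + t *\<^sub>R b) /\<^sub>R s = ((1-t)/s) *\<^sub>R a + (t/s) *\<^sub>R b"
        by (simp add: scaleR_add_right divide_inverse mult.commute)
      show ?thesis unfolding f1 f2 f3 ..
    qed
    moreover have "(1-t)*\<alpha>/s + t*\<beta>/s = 1" using s unfolding s_def by (simp add: add_divide_distrib[symmetric])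
    moreover have "(1-t)*\<alpha>/s \<ge> 0" "t*\<beta>/s \<ge> 0" using A B s t by auto
    ultimately have "((1 - t) *\<^sub>R a + t *\<^sub>R b) /\<^sub>R s \<in> C"
      using convexD[OF cvx A(2) B(2)] by metis
    then have "s \<in> S ((1 - t) *\<^sub>R a + t *\<^sub>R b)" using S_iff s by auto
    then have "gauge_fn C ((1 - t) *\<^sub>R a + t *\<^sub>R b) \<le> s" by (rule g_le)
    also have "s = (1 - t) * gauge_fn C a + t * gauge_fn C b + e"
      unfolding s_def \<alpha>_def \<beta>_def by (simp add: algebra_simps)
    finally show "gauge_fn C ((1 - t) *\<^sub>R a + t *\<^sub>R b) \<le> (1 - t) * gauge_fn C a + t * gauge_fn C b + e" .
  qed
qed simp

lemma g_cont: "continuous_on UNIV (gauge_fn C)"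
  using convex_on_continuous[OF open_UNIV g_convex] .

end

definition ismin :: "('a::real_inner \<Rightarrow> real) \<Rightarrow> 'a \<Rightarrow> 'a \<Rightarrow> bool" where
  "ismin f y z \<longleftrightarrow> (\<forall>w. (1/2) * (norm (z - y))\<^sup>2 + f z \<le> (1/2) * (norm (w - y))\<^sup>2 + f w)"

lemma prox_exists:
  fixes f :: "'a::euclidean_space \<Rightarrow> real"
  assumes cont: "continuous_on UNIV f" and nn: "\<And>x. f x \<ge> 0"
  shows "\<exists>z. ismin f y z"
proof -
  define h where "h w = (1/2) * (norm (w - y))\<^sup>2 + f w" for w
  define R where "R = sqrt (2 * f y)"
  have hc: "continuous_on (cball y R) h" unfolding h_def
    by (intro continuous_intros continuous_on_subset[OF cont]) auto
  have "R \<ge> 0" unfolding R_def using nn[of y] by simp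
  then have ne: "cball y R \<noteq> {}" by simp
  obtain z where z: "z \<in> cball y R" "\<And>w. w \<in> cball y R \<Longrightarrow> h z \<le> h w"
    using continuous_attains_inf[OF compact_cball ne hc] by blast
  have "h z \<le> h w" for w
  proof (cases "w \<in> cball y R")
    case True then show ?thesis using z by blast
  next
    case False
    then have "norm (w - y) > R" by (simp add: dist_norm norm_minus_commute)
    then have "(norm (w - y))\<^sup>2 > R\<^sup>2" using \<open>R \<ge> 0\<close>
      by (meson power_strict_mono zero_less_numeral)
    moreover have "R\<^sup>2 = 2 * f y" unfolding R_def using nn[of y] by simp
    ultimately have "h w > h y" unfolding h_def using nn[of w] by simp
    moreover have "h z \<le> h y" using z \<open>R \<ge> 0\<close> by simp
    ultimately show ?thesis by simp
  qed
  then show ?thesis unfolding ismin_def h_def by blast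
qed

lemma prox_ismin:
  fixes f :: "'a::euclidean_space \<Rightarrow> real"
  assumes "continuous_on UNIV f" "\<And>x. f x \<ge> 0"
  shows "ismin f y (prox f y)"
  using someI_ex[OF prox_exists[OF assms, of y]] unfolding prox_def ismin_def by blast

lemma ismin_var:
  fixes f :: "'a::real_inner \<Rightarrow> real"
  assumes cvx: "convex_on UNIV f" and m: "ismin f a p"
  shows "inner (a - p) (w - p) \<le> f w - f p"
proof -
  define D where "D = inner (a - p) (w - p) - (f w - f p)"
  define N where "N = (norm (w - p))\<^sup>2"
  have N: "N \<ge> 0" unfolding N_def by simp
  have key: "D \<le> s / 2 * N" if s: "0 < s" "s \<le> 1" for s
  proof -
    define ws where "ws = (1 - s) *\<^sub>R p + s *\<^sub>R w"
    have "(1/2) * (norm (p - a))\<^sup>2 + f p \<le> (1/2) * (norm (ws - a))\<^sup>2 + f ws"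
      using m unfolding ismin_def by blast
    moreover have "f ws \<le> (1 - s) * f p + s * f w"
      unfolding ws_def using convex_onD[OF cvx, of s p w] s by simp
    moreover have "(norm (ws - a))\<^sup>2 = (norm (p - a))\<^sup>2 + 2 * s * inner (p - a) (w - p) + s\<^sup>2 * N"
    proof -
      have eq: "ws - a = (p - a) + s *\<^sub>R (w - p)" unfolding ws_def by (simp add: algebra_simps)
      have sq: "(norm (x + y))\<^sup>2 = (norm x)\<^sup>2 + 2 * inner x y + (norm y)\<^sup>2" for x y :: 'a
        by (simp add: power2_norm_eq_inner inner_add_left inner_add_right inner_commute)
      show ?thesis unfolding eq sq N_def by (simp add: power_mult_distrib)
    qed
    ultimately have "0 \<le> s * inner (p - a) (w - p) + s\<^sup>2 / 2 * N + s * (f w - f p)"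
      by (simp add: algebra_simps)
    then have "0 \<le> s * (inner (p - a) (w - p) + s / 2 * N + (f w - f p))"
      by (simp add: algebra_simps power2_eq_square)
    then have "0 \<le> inner (p - a) (w - p) + s / 2 * N + (f w - f p)"
      using s by (simp add: zero_le_mult_iff)
    moreover have "inner (p - a) (w - p) = - inner (a - p) (w - p)"
      by (simp add: inner_diff_left)
    ultimately show ?thesis unfolding D_def by simp
  qed
  have "D \<le> 0"
  proof (rule ccontr)
    assume "\<not> D \<le> 0"
    then have D: "D > 0" by simp
    define s where "s = min 1 (D / (N + 1))"
    have s: "0 < s" "s \<le> 1" unfolding s_def using D N by auto
    have "s / 2 * N \<le> D / (N + 1) / 2 * N"
      using N unfolding s_def by (intro mult_right_mono divide_right_mono) auto
    also have "\<dots> < D" using D N by (simp add: field_simps add_nonneg_pos)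
    finally show False using key[OF s] by simp
  qed
  then show ?thesis unfolding D_def by simp
qed

lemma ismin_nonexp:
  fixes f :: "'a::real_inner \<Rightarrow> real"
  assumes cvx: "convex_on UNIV f" and p: "ismin f a p" and q: "ismin f b q"
  shows "norm (p - q) \<le> norm (a - b)"
proof -
  have 1: "inner (a - p) (q - p) \<le> f q - f p" by (rule ismin_var[OF cvx p])
  have 2: "inner (b - q) (p - q) \<le> f p - f q" by (rule ismin_var[OF cvx q])
  have "inner (a - p) (q - p) + inner (b - q) (p - q) = inner (a - b) (q - p) + (norm (p - q))\<^sup>2"
    by (simp add: power2_norm_eq_inner inner_diff_left inner_diff_right inner_commute algebra_simps)
  with 1 2 have "(norm (p - q))\<^sup>2 \<le> inner (a - b) (p - q)"
    by (simp add: inner_diff_right)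
  also have "\<dots> \<le> norm (a - b) * norm (p - q)" by (rule norm_cauchy_schwarz)
  finally have "norm (p - q) * norm (p - q) \<le> norm (a - b) * norm (p - q)" by (simp add: power2_eq_square)
  then show ?thesis
    by (cases "norm (p - q) = 0") (auto simp: mult_le_cancel_right)
qed


lemma gauge_prox_step:
  fixes C :: "'a::euclidean_space set"
  assumes "convex C" "0 \<in> interior C" "t > 0" "t' > 0"
    and lip: "norm (prox (\<lambda>x. t * gauge_fn C x) B - prox (\<lambda>x. t' * gauge_fn C x) B) \<le> Lc * \<bar>t - t'\<bar>"
  shows "norm (prox (\<lambda>x. t * gauge_fn C x) A - prox (\<lambda>x. t' * gauge_fn C x) B) \<le> norm (A - B) + Lc * \<bar>t - t'\<bar>"
proof -
  interpret gset C using assms by unfold_locales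
  let ?f = "\<lambda>x. t * gauge_fn C x"
  have c: "continuous_on UNIV ?f" by (intro continuous_intros g_cont)
  have n: "?f x \<ge> 0" for x using assms(3) g_nonneg by simp
  have v: "convex_on UNIV ?f" using assms(3) g_convex by (intro convex_on_cmul) auto
  have "norm (prox ?f A - prox ?f B) \<le> norm (A - B)"
    by (rule ismin_nonexp[OF v prox_ismin[OF c n] prox_ismin[OF c n]])
  then show ?thesis using lip norm_triangle_ineq[of "prox ?f A - prox ?f B" "prox ?f B - prox (\<lambda>x. t' * gauge_fn C x) B"]
    by simp
qed

lemma fold_bound:
  fixes C :: "nat \<Rightarrow> 'a::euclidean_space set"
  assumes "\<And>i. i < m \<Longrightarrow> compact (C i) \<and> convex (C i) \<and> 0 \<in> interior (C i)"
    and "\<And>i t t' y. i < m \<Longrightarrow> t > 0 \<Longrightarrow> t' > 0 \<Longrightarrow>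
           norm (prox (\<lambda>x. t * gauge_fn (C i) x) y - prox (\<lambda>x. t' * gauge_fn (C i) x) y)
             \<le> L i * \<bar>t - t'\<bar>"
    and "\<And>i. i < m \<Longrightarrow> \<theta> i > 0"
    and "\<And>i. i < m \<Longrightarrow> \<theta>' i > 0"
  shows "set xs \<subseteq> {..<m} \<Longrightarrow>
    norm (foldr (\<lambda>i z. prox (\<lambda>x. \<theta> i * gauge_fn (C i) x) z) xs y
        - foldr (\<lambda>i z. prox (\<lambda>x. \<theta>' i * gauge_fn (C i) x) z) xs y)
     \<le> sum_list (map (\<lambda>i. L i * \<bar>\<theta> i - \<theta>' i\<bar>) xs)"
proof (induction xs)
  case Nil then show ?case by simp
next
  case (Cons i xs)
  then have i: "i < m" and IH: "norm (foldr (\<lambda>i z. prox (\<lambda>x. \<theta> i * gauge_fn (C i) x) z) xs y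
        - foldr (\<lambda>i z. prox (\<lambda>x. \<theta>' i * gauge_fn (C i) x) z) xs y)
     \<le> sum_list (map (\<lambda>i. L i * \<bar>\<theta> i - \<theta>' i\<bar>) xs)" by auto
  show ?case
    using gauge_prox_step[of "C i" "\<theta> i" "\<theta>' i", OF _ _ _ _ assms(2)[OF i assms(3)[OF i] assms(4)[OF i]]]
      assms(1)[OF i] assms(3)[OF i] assms(4)[OF i] IH
    by (simp, smt (verit))
qed

theorem corollary5:
  fixes C :: "nat \<Rightarrow> 'a::euclidean_space set"
    and L :: "nat \<Rightarrow> real"
    and m :: nat
  assumes "m \<ge> 1"
    and "\<And>i. i < m \<Longrightarrow> compact (C i) \<and> convex (C i) \<and> 0 \<in> interior (C i)"
    and "\<And>i. i < m \<Longrightarrow> L i > 0"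
    and "\<And>i t t' y. i < m \<Longrightarrow> t > 0 \<Longrightarrow> t' > 0 \<Longrightarrow>
           norm (prox (\<lambda>x. t * gauge_fn (C i) x) y - prox (\<lambda>x. t' * gauge_fn (C i) x) y)
             \<le> L i * \<bar>t - t'\<bar>"
    and "\<And>i. i < m \<Longrightarrow> \<theta> i > 0"
    and "\<And>i. i < m \<Longrightarrow> \<theta>' i > 0"
  shows "norm (prox_comp m \<theta> (\<lambda>i. gauge_fn (C i)) y - prox_comp m \<theta>' (\<lambda>i. gauge_fn (C i)) y)
           \<le> sqrt (real m) * (MAX i\<in>{..<m}. L i) * sqrt (\<Sum>i<m. (\<theta> i - \<theta>' i)\<^sup>2)"
proof -
  define M where "M = (MAX i\<in>{..<m}. L i)"
  have ne: "{..<m} \<noteq> {}" using assms(1) by (simp add: lessThan_empty_iff)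
  have LM: "L i \<le> M" if "i < m" for i unfolding M_def using that by (intro Max_ge) auto
  have M0: "M \<ge> 0" using LM[of 0] assms(3)[of 0] assms(1) by simp
  have "norm (prox_comp m \<theta> (\<lambda>i. gauge_fn (C i)) y - prox_comp m \<theta>' (\<lambda>i. gauge_fn (C i)) y)
      \<le> sum_list (map (\<lambda>i. L i * \<bar>\<theta> i - \<theta>' i\<bar>) [0..<m])"
    unfolding prox_comp_def by (rule fold_bound[OF assms(2,4,5,6)]) auto
  also have "\<dots> = (\<Sum>i<m. L i * \<bar>\<theta> i - \<theta>' i\<bar>)"
    by (simp add: sum_set_upt_conv_sum_list_nat[symmetric] atLeast0LessThan)
  also have "\<dots> \<le> (\<Sum>i<m. M * \<bar>\<theta> i - \<theta>' i\<bar>)"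
    by (intro sum_mono mult_right_mono LM) auto
  also have "\<dots> = M * (\<Sum>i<m. \<bar>\<theta> i - \<theta>' i\<bar>)" by (simp add: sum_distrib_left)
  also have "\<dots> \<le> M * (sqrt (real m) * sqrt (\<Sum>i<m. (\<theta> i - \<theta>' i)\<^sup>2))"
  proof (rule mult_left_mono[OF _ M0])
    have "(\<Sum>i<m. \<bar>\<theta> i - \<theta>' i\<bar>)\<^sup>2 \<le> (\<Sum>i<m. (\<bar>\<theta> i - \<theta>' i\<bar>)\<^sup>2) * card {..<m}"
      by (rule sum_squared_le_sum_of_squares)
    then have "(\<Sum>i<m. \<bar>\<theta> i - \<theta>' i\<bar>) \<le> sqrt ((\<Sum>i<m. (\<theta> i - \<theta>' i)\<^sup>2) * real m)"
      by (intro real_le_rsqrt) simp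
    then show "(\<Sum>i<m. \<bar>\<theta> i - \<theta>' i\<bar>) \<le> sqrt (real m) * sqrt (\<Sum>i<m. (\<theta> i - \<theta>' i)\<^sup>2)"
      by (simp add: real_sqrt_mult mult.commute)
  qed
  finally show ?thesis unfolding M_def by (simp add: mult_ac)
qed

end
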